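(* Let $X$ be a finite nonempty alphabet and $\mathcal{L}\subseteq 2^{X^*}$ a nontrivial, WP-recursive language family closed under finite unions, finite intersections and complementation. Let $(C,\mathbf{A})$ be a conditional classification problem with $\mathbf{A}=(A_1,\dots,A_k)$, $C$ recursive, and for each $1\le i\le k$: $A_i$ recursive and $A_i\notin\mathit{cclass}_1(C,\mathcal{L})$. Then there exists $\mathbf{B}=(B_1,\dots,B_k)$ with $\mathbf{B}\le\mathbf{A}$, $\mathbf{B}\in\mathit{ccore}_k(C,\mathcal{L})$, and each $B_i$ recursive.
   Context: $\mathcal{L}$ is nontrivial if $\emptyset,X^*\in\mathcal{L}$ and for all $Q\in\mathcal{L}$ and finite $E\subseteq X^*$ both $Q\cup E\in\mathcal{L}$ and $Q\setminus E\in\mathcal{L}$. $\mathcal{L}$ is WP-recursive if there is a surjection $e:\mathbb{N}_0\to\mathcal{L}$ such that the predicate "$w\in e(i)$" (for $i\in\mathbb{N}_0$, $w\in X^*$) is decidable uniformly in $i,w$. A classification problem is a vector $(A_1,\dots,A_k)$, $k\ge1$, of pairwise disjoint infinite subsets of $X^*$, of length $k$. A conditional classification problem is a pair $(C,\mathbf{A})$ with $C\subseteq X^*$, $\mathbf{A}$ a classification problem and $C$ disjoint from all components of $\mathbf{A}$. For vectors $\mathbf{B}=(B_1,\dots,B_m)$, $\mathbf{Q}=(Q_1,\dots,Q_k)$, $\mathbf{B}\le\mathbf{Q}$ means $1\le m\le k$ and there is an injective $\sigma:\{1,\dots,m\}\to\{1,\dots,k\}$ with $B_i\subseteq Q_{\sigma(i)}$.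 An $\mathcal{L}$-partition is a vector of pairwise disjoint members of $\mathcal{L}$ whose union is $X^*$. $\mathit{cclass}_k(C,\mathcal{L})$ is the set of classification problems $\mathbf{A}$ of length $k$ such that $(C,\mathbf{A})$ is a conditional classification problem and there is an $\mathcal{L}$-partition $(Q_0,Q_1,\dots,Q_k)$ with $C\subseteq Q_0$ and $\mathbf{A}\le(Q_1,\dots,Q_k)$ (a single set $A$ is identified with $(A)$). $\mathit{ccore}_k(C,\mathcal{L})$ is the set of classification problems $\mathbf{A}$ of length $k$ with $(C,\mathbf{A})$ a conditional classification problem such that every classification problem $\mathbf{A}'\le\mathbf{A}$ (any length $\ge1$) satisfies $\mathbf{A}'\notin\mathit{cclass}_{|\mathbf{A}'|}(C,\mathcal{L})$. *)

theory Defs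
  imports Main "HOL-Library.Nat_Bijection"
begin

datatype recf = Zero | Succ | Proj nat | Comp recf "recf list" | Prim recf recf | Mn recf

inductive evalr :: "recf \<Rightarrow> nat list \<Rightarrow> nat \<Rightarrow> bool" where
  ev_zero: "evalr Zero xs 0"
| ev_succ: "evalr Succ (x # xs) (Suc x)"
| ev_proj: "i < length xs \<Longrightarrow> evalr (Proj i) xs (xs ! i)"
| ev_comp: "list_all2 (\<lambda>g y. evalr g xs y) gs ys \<Longrightarrow> evalr f ys z \<Longrightarrow> evalr (Comp f gs) xs z"
| ev_prim0: "evalr f xs y \<Longrightarrow> evalr (Prim f g) (0 # xs) y"
| ev_primS: "evalr (Prim f g) (n # xs) y \<Longrightarrow> evalr g (n # y # xs) z \<Longrightarrow> evalr (Prim f g) (Suc n # xs) z"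
| ev_mn: "evalr f (n # xs) 0 \<Longrightarrow> (\<forall>m<n. \<exists>y. evalr f (m # xs) y \<and> y > 0) \<Longrightarrow> evalr (Mn f) xs n"

definition computable :: "(nat \<Rightarrow> nat) \<Rightarrow> bool" where
  "computable h \<longleftrightarrow> (\<exists>f. \<forall>n. evalr f [n] (h n))"

definition recursive_set :: "nat set \<Rightarrow> bool" where
  "recursive_set S \<longleftrightarrow> computable (\<lambda>n. if n \<in> S then 1 else 0)"

definition alph_enum :: "'a set \<Rightarrow> 'a \<Rightarrow> nat" where
  "alph_enum X = (SOME e. bij_betw e X {..<card X})"

definition wcode :: "'a set \<Rightarrow> 'a list \<Rightarrow> nat" where
  "wcode X w = list_encode (map (alph_enum X) w)"

definition recursive_lang :: "'a set \<Rightarrow> 'a list set \<Rightarrow> bool" where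
  "recursive_lang X S \<longleftrightarrow> recursive_set (wcode X ` S)"

definition nontrivial :: "'a set \<Rightarrow> 'a list set set \<Rightarrow> bool" where
  "nontrivial X L \<longleftrightarrow> {} \<in> L \<and> lists X \<in> L \<and>
     (\<forall>Q\<in>L. \<forall>E. finite E \<and> E \<subseteq> lists X \<longrightarrow> Q \<union> E \<in> L \<and> Q - E \<in> L)"

definition WP_recursive :: "'a set \<Rightarrow> 'a list set set \<Rightarrow> bool" where
  "WP_recursive X L \<longleftrightarrow> (\<exists>e :: nat \<Rightarrow> 'a list set. range e = L \<and>
     recursive_set {prod_encode (i, wcode X w) | i w. w \<in> lists X \<and> w \<in> e i})"

section \<open>Classification problems (vectors as lists, indexed from 0)\<close>

definition pw_disjoint :: "'b set list \<Rightarrow> bool" where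
  "pw_disjoint A \<longleftrightarrow> (\<forall>i<length A. \<forall>j<length A. i \<noteq> j \<longrightarrow> A ! i \<inter> A ! j = {})"

definition class_problem :: "'a set \<Rightarrow> 'a list set list \<Rightarrow> bool" where
  "class_problem X A \<longleftrightarrow> length A \<ge> 1 \<and> pw_disjoint A \<and>
     (\<forall>i<length A. A ! i \<subseteq> lists X \<and> infinite (A ! i))"

definition cond_class_problem :: "'a set \<Rightarrow> 'a list set \<Rightarrow> 'a list set list \<Rightarrow> bool" where
  "cond_class_problem X C A \<longleftrightarrow> C \<subseteq> lists X \<and> class_problem X A \<and>
     (\<forall>i<length A. C \<inter> A ! i = {})"

definition vec_le :: "'b set list \<Rightarrow> 'b set list \<Rightarrow> bool" where
  "vec_le B Q \<longleftrightarrow> 1 \<le> length B \<and> length B \<le> length Q \<and>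
     (\<exists>\<sigma>. inj_on \<sigma> {..<length B} \<and> \<sigma> ` {..<length B} \<subseteq> {..<length Q} \<and>
          (\<forall>i<length B. B ! i \<subseteq> Q ! (\<sigma> i)))"

definition L_partition :: "'a set \<Rightarrow> 'a list set set \<Rightarrow> 'a list set list \<Rightarrow> bool" where
  "L_partition X L Q \<longleftrightarrow> (\<forall>i<length Q. Q ! i \<in> L) \<and> pw_disjoint Q \<and> \<Union>(set Q) = lists X"

definition cclass :: "'a set \<Rightarrow> 'a list set set \<Rightarrow> nat \<Rightarrow> 'a list set \<Rightarrow> 'a list set list set" where
  "cclass X L k C = {A. length A = k \<and> cond_class_problem X C A \<and>
     (\<exists>Q. length Q = k + 1 \<and> L_partition X L Q \<and> C \<subseteq> Q ! 0 \<and> vec_le A (tl Q))}"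

definition ccore :: "'a set \<Rightarrow> 'a list set set \<Rightarrow> nat \<Rightarrow> 'a list set \<Rightarrow> 'a list set list set" where
  "ccore X L k C = {A. length A = k \<and> cond_class_problem X C A \<and>
     (\<forall>A'. class_problem X A' \<and> vec_le A' A \<longrightarrow> A' \<notin> cclass X L (length A') C)}"

end

theory Submission
  imports Defs
begin


definition rfn :: "nat \<Rightarrow> (nat list \<Rightarrow> nat) \<Rightarrow> bool" where
  "rfn n F \<longleftrightarrow> (\<exists>f. \<forall>xs. length xs = n \<longrightarrow> evalr f xs (F xs))"

lemma rfn_zero: "rfn n (\<lambda>_. 0)"
  unfolding rfn_def by (auto intro: evalr.intros)

lemma rfn_proj: "i < n \<Longrightarrow> rfn n (\<lambda>xs. xs ! i)"
  unfolding rfn_def by (auto intro: evalr.intros)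

lemma rfn_succ: "rfn n F \<Longrightarrow> rfn n (\<lambda>xs. Suc (F xs))"
  unfolding rfn_def
proof (elim exE)
  fix f assume f: "\<forall>xs. length xs = n \<longrightarrow> evalr f xs (F xs)"
  show "\<exists>f. \<forall>xs. length xs = n \<longrightarrow> evalr f xs (Suc (F xs))"
    by (rule exI[of _ "Comp Succ [f]"]) (auto intro!: evalr.intros f[rule_format])
qed

lemma rfn_comp:
  assumes G: "rfn m G" and len: "length Fs = m" and Fs: "\<forall>F\<in>set Fs. rfn n F"
  shows "rfn n (\<lambda>xs. G (map (\<lambda>F. F xs) Fs))"
proof -
  obtain g where g: "\<forall>xs. length xs = m \<longrightarrow> evalr g xs (G xs)" using G unfolding rfn_def by blast
  have "\<forall>F\<in>set Fs. \<exists>f. \<forall>xs. length xs = n \<longrightarrow> evalr f xs (F xs)" using Fs unfolding rfn_def by blast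
  then obtain h where h: "\<forall>F\<in>set Fs. \<forall>xs. length xs = n \<longrightarrow> evalr (h F) xs (F xs)" by metis
  show ?thesis unfolding rfn_def
  proof (intro exI allI impI)
    fix xs :: "nat list" assume l: "length xs = n"
    have "list_all2 (\<lambda>g y. evalr g xs y) (map h Fs) (map (\<lambda>F. F xs) Fs)"
      using h l by (auto simp: list_all2_map1 list_all2_map2 list_all2_conv_all_nth)
    moreover have "evalr g (map (\<lambda>F. F xs) Fs) (G (map (\<lambda>F. F xs) Fs))" using g len by simp
    ultimately show "evalr (Comp g (map h Fs)) xs (G (map (\<lambda>F. F xs) Fs))" by (rule evalr.intros)
  qed
qed

fun pr :: "(nat list \<Rightarrow> nat) \<Rightarrow> (nat list \<Rightarrow> nat) \<Rightarrow> nat \<Rightarrow> nat list \<Rightarrow> nat" where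
  "pr F G 0 xs = F xs"
| "pr F G (Suc k) xs = G (k # pr F G k xs # xs)"

lemma rfn_prim:
  assumes F: "rfn n F" and G: "rfn (Suc (Suc n)) G"
  shows "rfn (Suc n) (\<lambda>xs. pr F G (hd xs) (tl xs))"
proof -
  obtain f where f: "\<forall>xs. length xs = n \<longrightarrow> evalr f xs (F xs)" using F unfolding rfn_def by blast
  obtain g where g: "\<forall>xs. length xs = Suc (Suc n) \<longrightarrow> evalr g xs (G xs)" using G unfolding rfn_def by blast
  have main: "length ys = n \<Longrightarrow> evalr (Prim f g) (k # ys) (pr F G k ys)" for k ys
  proof (induction k)
    case 0 thus ?case using f by (auto intro: evalr.intros)
  next
    case (Suc k) thus ?case using g by (auto intro: evalr.intros)
  qed
  show ?thesis unfolding rfn_def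
  proof (intro exI allI impI)
    fix xs :: "nat list" assume "length xs = Suc n"
    then obtain k ys where "xs = k # ys" "length ys = n" by (cases xs) auto
    thus "evalr (Prim f g) xs (pr F G (hd xs) (tl xs))" using main by simp
  qed
qed

lemma rfn_mn:
  assumes F: "rfn (Suc n) F" and ex: "\<forall>ys. length ys = n \<longrightarrow> (\<exists>k. F (k # ys) = 0)"
  shows "rfn n (\<lambda>ys. LEAST k. F (k # ys) = 0)"
proof -
  obtain f where f: "\<forall>xs. length xs = Suc n \<longrightarrow> evalr f xs (F xs)" using F unfolding rfn_def by blast
  show ?thesis unfolding rfn_def
  proof (intro exI allI impI)
    fix ys :: "nat list" assume l: "length ys = n"
    then obtain k where k: "F (k # ys) = 0" using ex by blast
    let ?L = "LEAST k. F (k # ys) = 0"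
    have "F (?L # ys) = 0" using k by (rule LeastI)
    moreover have "\<forall>m<?L. \<exists>y. evalr f (m # ys) y \<and> y > 0"
    proof (intro allI impI)
      fix m assume "m < ?L"
      hence "F (m # ys) \<noteq> 0" by (rule not_less_Least)
      thus "\<exists>y. evalr f (m # ys) y \<and> y > 0" using f l by (intro exI[of _ "F (m # ys)"]) auto
    qed
    ultimately show "evalr (Mn f) ys ?L" using f l by (metis ev_mn length_Cons)
  qed
qed

lemma rfn_cong: "rfn n F \<Longrightarrow> (\<And>xs. length xs = n \<Longrightarrow> F xs = G xs) \<Longrightarrow> rfn n G"
  unfolding rfn_def by metis

lemma rfn_reidx:
  assumes G: "rfn (length is) G" and "\<forall>i\<in>set is. i < n"
  shows "rfn n (\<lambda>xs. G (map (nth xs) is))"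
proof -
  have "rfn n (\<lambda>xs. G (map (\<lambda>F. F xs) (map (\<lambda>i xs. xs ! i) is)))"
    using assms by (intro rfn_comp) (auto intro: rfn_proj)
  thus ?thesis by (simp add: comp_def)
qed

lemma rfn_comp1: "rfn 1 G \<Longrightarrow> rfn n F \<Longrightarrow> rfn n (\<lambda>xs. G [F xs])"
  using rfn_comp[of 1 G "[F]" n] by simp
lemma rfn_comp2: "rfn 2 G \<Longrightarrow> rfn n F1 \<Longrightarrow> rfn n F2 \<Longrightarrow> rfn n (\<lambda>xs. G [F1 xs, F2 xs])"
  using rfn_comp[of 2 G "[F1,F2]" n] by simp
lemma rfn_comp3: "rfn 3 G \<Longrightarrow> rfn n F1 \<Longrightarrow> rfn n F2 \<Longrightarrow> rfn n F3 \<Longrightarrow> rfn n (\<lambda>xs. G [F1 xs, F2 xs, F3 xs])"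
  using rfn_comp[of 3 G "[F1,F2,F3]" n] by simp

lemma rfn_add: "rfn 2 (\<lambda>xs. xs ! 0 + xs ! 1)"
proof -
  let ?F = "\<lambda>ys::nat list. ys ! 0" and ?G = "\<lambda>ys::nat list. Suc (ys ! 1)"
  have R: "rfn 2 (\<lambda>xs. pr ?F ?G (hd xs) (tl xs))"
    using rfn_prim[of 1 ?F ?G] by (simp add: rfn_proj rfn_succ numeral_2_eq_2)
  have E: "pr ?F ?G k ys = k + ys ! 0" for k ys by (induction k) auto
  show ?thesis
    by (rule rfn_cong[OF R]) (simp only: E, auto simp: numeral_2_eq_2 length_Suc_conv)
qed

lemma rfn_mult: "rfn 2 (\<lambda>xs. xs ! 0 * xs ! 1)"
proof -
  let ?F = "\<lambda>ys::nat list. 0" and ?G = "\<lambda>ys::nat list. ys ! 1 + ys ! 2"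
  have G: "rfn 3 ?G" using rfn_comp2[OF rfn_add, of 3 "\<lambda>ys. ys!1" "\<lambda>ys. ys!2"] by (simp add: rfn_proj)
  have R: "rfn 2 (\<lambda>xs. pr ?F ?G (hd xs) (tl xs))"
    using rfn_prim[of 1 ?F ?G] G by (simp add: rfn_zero numeral_2_eq_2 numeral_3_eq_3)
  have E: "pr ?F ?G k ys = k * ys ! 0" for k ys by (induction k) auto
  show ?thesis
    by (rule rfn_cong[OF R]) (simp only: E, auto simp: numeral_2_eq_2 length_Suc_conv)
qed

lemma rfn_pred: "rfn 1 (\<lambda>xs. xs ! 0 - 1)"
proof -
  let ?F = "\<lambda>ys::nat list. 0" and ?G = "\<lambda>ys::nat list. ys ! 0"
  have R: "rfn 1 (\<lambda>xs. pr ?F ?G (hd xs) (tl xs))"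
    using rfn_prim[of 0 ?F ?G] by (simp add: rfn_zero rfn_proj)
  have E: "pr ?F ?G k ys = k - 1" for k ys by (induction k) auto
  show ?thesis
    by (rule rfn_cong[OF R]) (simp only: E, auto simp: length_Suc_conv)
qed

lemma rfn_sub: "rfn 2 (\<lambda>xs. xs ! 0 - xs ! 1)"
proof -
  let ?F = "\<lambda>ys::nat list. ys ! 0" and ?G = "\<lambda>ys::nat list. ys ! 1 - 1"
  have G: "rfn 3 ?G" using rfn_comp1[OF rfn_pred, of 3 "\<lambda>ys. ys!1"] by (simp add: rfn_proj)
  have R: "rfn 2 (\<lambda>xs. pr ?F ?G (hd xs) (tl xs))"
    using rfn_prim[of 1 ?F ?G] G by (simp add: rfn_proj numeral_2_eq_2 numeral_3_eq_3)
  have E: "pr ?F ?G k ys = ys ! 0 - k" for k ys by (induction k) auto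
  have "rfn 2 (\<lambda>xs. xs ! 1 - xs ! 0)"
    by (rule rfn_cong[OF R]) (simp only: E, auto simp: numeral_2_eq_2 length_Suc_conv)
  hence "rfn (length [1::nat,0]) (\<lambda>xs. xs ! 1 - xs ! 0)" by (simp add: numeral_2_eq_2)
  from rfn_reidx[OF this, of 2] show ?thesis by simp
qed

lemma rfn_isz: "rfn 1 (\<lambda>xs. if xs ! 0 = 0 then 1 else 0)"
proof -
  let ?F = "\<lambda>ys::nat list. 1" and ?G = "\<lambda>ys::nat list. 0"
  have R: "rfn 1 (\<lambda>xs. pr ?F ?G (hd xs) (tl xs))"
    using rfn_prim[of 0 ?F ?G] rfn_succ[OF rfn_zero[of 0]] by (simp add: rfn_zero)
  have E: "pr ?F ?G k ys = (if k = 0 then 1 else 0)" for k ys by (cases k) auto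
  show ?thesis
    by (rule rfn_cong[OF R]) (simp only: E, auto simp: length_Suc_conv)
qed

definition rpred :: "nat \<Rightarrow> (nat list \<Rightarrow> bool) \<Rightarrow> bool" where
  "rpred n P \<longleftrightarrow> rfn n (\<lambda>xs. if P xs then 1 else 0)"

lemma rpred_cong: "rpred n P \<Longrightarrow> (\<And>xs. length xs = n \<Longrightarrow> P xs = Q xs) \<Longrightarrow> rpred n Q"
  unfolding rpred_def by (erule rfn_cong) simp

lemma rpred_comp:
  assumes "rpred m P" "length Fs = m" "\<forall>F\<in>set Fs. rfn n F"
  shows "rpred n (\<lambda>xs. P (map (\<lambda>F. F xs) Fs))"
  using rfn_comp[of m "\<lambda>xs. if P xs then 1 else 0" Fs n] assms unfolding rpred_def by simp

lemma rpred_reidx: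
  assumes G: "rpred (length is) P" and "\<forall>i\<in>set is. i < n"
  shows "rpred n (\<lambda>xs. P (map (nth xs) is))"
  using rfn_reidx[of "is" "\<lambda>xs. if P xs then 1 else 0" n] assms unfolding rpred_def by simp

lemma rpred_not: "rpred n P \<Longrightarrow> rpred n (\<lambda>xs. \<not> P xs)"
  unfolding rpred_def
proof -
  assume "rfn n (\<lambda>xs. if P xs then 1 else 0)"
  from rfn_comp1[OF rfn_isz this] show "rfn n (\<lambda>xs. if \<not> P xs then 1 else 0)"
    by (rule rfn_cong) simp
qed

lemma rpred_and: "rpred n P \<Longrightarrow> rpred n Q \<Longrightarrow> rpred n (\<lambda>xs. P xs \<and> Q xs)"
  unfolding rpred_def
proof -
  assume "rfn n (\<lambda>xs. if P xs then 1 else 0)" "rfn n (\<lambda>xs. if Q xs then 1 else 0)"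
  from rfn_comp2[OF rfn_mult this] show "rfn n (\<lambda>xs. if P xs \<and> Q xs then 1 else 0)"
    by (rule rfn_cong) simp
qed

lemma rpred_or: "rpred n P \<Longrightarrow> rpred n Q \<Longrightarrow> rpred n (\<lambda>xs. P xs \<or> Q xs)"
  using rpred_not[OF rpred_and[OF rpred_not rpred_not], of n P Q] by simp

lemma rpred_imp: "rpred n P \<Longrightarrow> rpred n Q \<Longrightarrow> rpred n (\<lambda>xs. P xs \<longrightarrow> Q xs)"
  using rpred_or[OF rpred_not, of n P Q] by simp

lemma rpred_eq: "rfn n F \<Longrightarrow> rfn n G \<Longrightarrow> rpred n (\<lambda>xs. F xs = G xs)"
proof -
  assume F: "rfn n F" and G: "rfn n G"
  have "rfn n (\<lambda>xs. (F xs - G xs) + (G xs - F xs))"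
    using rfn_comp2[OF rfn_add rfn_comp2[OF rfn_sub F G] rfn_comp2[OF rfn_sub G F]] by simp
  from rfn_comp1[OF rfn_isz this] show ?thesis unfolding rpred_def
    by (rule rfn_cong) auto
qed

lemma rpred_less: "rfn n F \<Longrightarrow> rfn n G \<Longrightarrow> rpred n (\<lambda>xs. F xs < G xs)"
proof -
  assume F: "rfn n F" and G: "rfn n G"
  have "rpred n (\<lambda>xs. G xs - F xs = 0)" unfolding rpred_def
    using rfn_comp1[OF rfn_isz rfn_comp2[OF rfn_sub G F]] by simp
  from rpred_not[OF this] show ?thesis by (rule rpred_cong) auto
qed

lemma rpred_le: "rfn n F \<Longrightarrow> rfn n G \<Longrightarrow> rpred n (\<lambda>xs. F xs \<le> G xs)"
  using rpred_not[OF rpred_less[of n G F]] by (simp add: not_less)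

lemma rfn_if: "rpred n P \<Longrightarrow> rfn n F \<Longrightarrow> rfn n G \<Longrightarrow> rfn n (\<lambda>xs. if P xs then F xs else G xs)"
proof -
  assume P: "rpred n P" and F: "rfn n F" and G: "rfn n G"
  have P': "rpred n (\<lambda>xs. \<not> P xs)" using rpred_not[OF P] .
  have "rfn n (\<lambda>xs. (if P xs then 1 else 0) * F xs + (if \<not> P xs then 1 else 0) * G xs)"
    using rfn_comp2[OF rfn_add rfn_comp2[OF rfn_mult P[unfolded rpred_def] F] rfn_comp2[OF rfn_mult P'[unfolded rpred_def] G]]
    by simp
  thus ?thesis by (rule rfn_cong) auto
qed

lemma map_nth_drop: "map (nth xs) [a..<length xs] = drop a xs"
  by (rule nth_equalityI) auto

lemma rpred_ball:
  assumes P: "rpred (Suc n) P"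
  shows "rpred (Suc n) (\<lambda>xs. \<forall>c<hd xs. P (c # tl xs))"
proof -
  let ?F = "\<lambda>ys::nat list. 1::nat"
  let ?G = "\<lambda>xs::nat list. xs ! 1 * (if P (xs ! 0 # drop 2 xs) then 1 else 0)"
  have F: "rfn n ?F" using rfn_succ[OF rfn_zero[of n]] by simp
  have "length (0 # [2..<Suc (Suc n)]) = Suc n" by auto
  hence "rpred (length (0 # [2..<Suc (Suc n)])) P" using P by (simp only:)
  from rpred_reidx[OF this, of "Suc (Suc n)"]
  have "rpred (Suc (Suc n)) (\<lambda>xs. P (map ((!) xs) (0 # [2..<Suc (Suc n)])))" by auto
  hence "rpred (Suc (Suc n)) (\<lambda>xs. P (xs ! 0 # drop 2 xs))"
    by (rule rpred_cong) (metis list.simps(9) map_nth_drop)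
  hence G: "rfn (Suc (Suc n)) ?G" unfolding rpred_def
    using rfn_comp2[OF rfn_mult rfn_proj[of 1 "Suc (Suc n)"]] by simp
  have R: "rfn (Suc n) (\<lambda>xs. pr ?F ?G (hd xs) (tl xs))" by (rule rfn_prim[OF F G])
  have E: "pr ?F ?G k ys = (if \<forall>c<k. P (c # ys) then 1 else 0)" for k ys
    by (induction k) (auto simp: less_Suc_eq)
  show ?thesis unfolding rpred_def by (rule rfn_cong[OF R]) (simp only: E)
qed

lemma rpred_bex:
  assumes P: "rpred (Suc n) P"
  shows "rpred (Suc n) (\<lambda>xs. \<exists>c<hd xs. P (c # tl xs))"
  using rpred_not[OF rpred_ball[OF rpred_not[OF P]]] by simp

lemma rfn_least:
  assumes P: "rpred (Suc n) P" and ex: "\<forall>ys. length ys = n \<longrightarrow> (\<exists>k. P (k # ys))"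
  shows "rfn n (\<lambda>ys. LEAST k. P (k # ys))"
proof -
  have "rfn (Suc n) (\<lambda>xs. if \<not> P xs then 1 else 0)" using rpred_not[OF P] unfolding rpred_def .
  hence "rfn (Suc n) (\<lambda>xs. if P xs then 0 else 1)" by (rule rfn_cong) auto
  from rfn_mn[OF this] ex have "rfn n (\<lambda>ys. LEAST k. (if P (k # ys) then 0 else 1) = (0::nat))" by simp
  thus ?thesis by (simp add: if_split_eq1)
qed

lemma rpred_const: "rpred n (\<lambda>_. b)"
  unfolding rpred_def by (cases b) (auto intro: rfn_zero rfn_succ[OF rfn_zero, simplified])

lemma computable_rfn: "computable h \<longleftrightarrow> rfn 1 (\<lambda>xs. h (xs ! 0))"
  unfolding computable_def rfn_def
proof
  assume "\<exists>f. \<forall>n. evalr f [n] (h n)"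
  then obtain f where f: "\<forall>n. evalr f [n] (h n)" ..
  show "\<exists>f. \<forall>xs. length xs = 1 \<longrightarrow> evalr f xs (h (xs ! 0))"
    by (rule exI[of _ f]) (auto simp: length_Suc_conv f)
next
  assume "\<exists>f. \<forall>xs. length xs = 1 \<longrightarrow> evalr f xs (h (xs ! 0))"
  then obtain f where f: "\<forall>xs. length xs = 1 \<longrightarrow> evalr f xs (h (xs ! 0))" ..
  show "\<exists>f. \<forall>n. evalr f [n] (h n)"
    by (rule exI[of _ f]) (use f in \<open>metis length_Cons list.size(3) nth_Cons_0 One_nat_def\<close>)
qed

lemma recursive_set_rpred: "recursive_set S \<longleftrightarrow> rpred 1 (\<lambda>xs. xs ! 0 \<in> S)"
  unfolding recursive_set_def rpred_def computable_rfn by simp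

lemma map_nth_all: "map (nth xs) [0..<length xs] = xs"
  by (rule nth_equalityI) auto

lemma rpred_bex2:
  assumes P: "rpred (Suc n) P" and B: "rfn n B"
  shows "rpred n (\<lambda>xs. \<exists>c<B xs. P (c # xs))"
proof -
  from rpred_bex[OF P]
  have Q: "rpred (Suc n) (\<lambda>ys. \<exists>c<hd ys. P (c # tl ys))" .
  have "rpred n (\<lambda>xs. (\<lambda>ys. \<exists>c<hd ys. P (c # tl ys)) (map (\<lambda>F. F xs) (B # map (\<lambda>i xs. xs ! i) [0..<n])))"
    by (rule rpred_comp[OF Q]) (auto intro: B rfn_proj)
  thus ?thesis
  proof (rule rpred_cong)
    fix xs :: "nat list" assume "length xs = n"
    hence "map ((!) xs) [0..<n] = xs" using map_nth_all[of xs] by simp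
    thus "(\<lambda>ys. \<exists>c<hd ys. P (c # tl ys)) (map (\<lambda>F. F xs) (B # map (\<lambda>i xs. xs ! i) [0..<n])) = (\<exists>c<B xs. P (c # xs))"
      by (simp add: comp_def)
  qed
qed

lemma rpred_ball2:
  assumes P: "rpred (Suc n) P" and B: "rfn n B"
  shows "rpred n (\<lambda>xs. \<forall>c<B xs. P (c # xs))"
  using rpred_not[OF rpred_bex2[OF rpred_not[OF P] B]] by simp

lemma rpred_mem: "recursive_set S \<Longrightarrow> rfn n F \<Longrightarrow> rpred n (\<lambda>xs. F xs \<in> S)"
  unfolding recursive_set_rpred rpred_def
  by (drule rfn_comp1) (auto)

lemma rfn_triangle: "rfn 1 (\<lambda>xs. triangle (xs ! 0))"
proof -
  let ?F = "\<lambda>ys::nat list. 0" and ?G = "\<lambda>ys::nat list. ys ! 1 + Suc (ys ! 0)"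
  have G: "rfn 2 ?G" using rfn_comp2[OF rfn_add rfn_proj[of 1 2, simplified] rfn_succ[OF rfn_proj[of 0 2, simplified]]] by simp
  have R: "rfn 1 (\<lambda>xs. pr ?F ?G (hd xs) (tl xs))"
    using rfn_prim[of 0 ?F ?G] G by (simp add: rfn_zero numeral_2_eq_2)
  have E: "pr ?F ?G k ys = triangle k" for k ys by (induction k) auto
  show ?thesis
    by (rule rfn_cong[OF R]) (simp only: E, auto simp: length_Suc_conv)
qed

lemma rfn_pe: "rfn 2 (\<lambda>xs. prod_encode (xs ! 0, xs ! 1))"
proof -
  have "rfn 2 (\<lambda>xs. triangle (xs ! 0 + xs ! 1) + xs ! 0)"
    using rfn_comp2[OF rfn_add rfn_comp1[OF rfn_triangle rfn_add] rfn_proj[of 0 2, simplified]] by simp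
  thus ?thesis by (rule rfn_cong) (simp add: prod_encode_def)
qed

lemma rpred_reidx': "rpred m P \<Longrightarrow> length is = m \<Longrightarrow> \<forall>i\<in>set is. i < n \<Longrightarrow> rpred n (\<lambda>xs. P (map (nth xs) is))"
  using rpred_reidx by blast
lemma rfn_reidx': "rfn m P \<Longrightarrow> length is = m \<Longrightarrow> \<forall>i\<in>set is. i < n \<Longrightarrow> rfn n (\<lambda>xs. P (map (nth xs) is))"
  using rfn_reidx by blast
lemma rfn_least': "rpred m P \<Longrightarrow> m = Suc n \<Longrightarrow> \<forall>ys. length ys = n \<longrightarrow> (\<exists>k. P (k # ys)) \<Longrightarrow> rfn n (\<lambda>ys. LEAST k. P (k # ys))"
  using rfn_least by blast
lemma rpred_bex2': "rpred m P \<Longrightarrow> m = Suc n \<Longrightarrow> rfn n B \<Longrightarrow> rpred n (\<lambda>xs. \<exists>c<B xs. P (c # xs))"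
  using rpred_bex2 by blast


definition sepP :: "nat set \<Rightarrow> nat set \<Rightarrow> nat \<Rightarrow> nat \<Rightarrow> bool" where
  "sepP SC SW j m \<longleftrightarrow> (\<forall>c<m. \<not> (c \<in> SC \<and> prod_encode (j, c) \<in> SW))"

definition goodP :: "nat set \<Rightarrow> nat set \<Rightarrow> nat set \<Rightarrow> nat \<Rightarrow> nat \<Rightarrow> nat \<Rightarrow> bool" where
  "goodP SA SC SW n m c \<longleftrightarrow> c \<in> SA \<and> (\<forall>j<Suc n. \<not> (sepP SC SW j m \<and> prod_encode (j, c) \<in> SW))"

definition Mstep :: "nat set \<Rightarrow> nat set \<Rightarrow> nat set \<Rightarrow> nat \<Rightarrow> nat \<Rightarrow> nat" where
  "Mstep SA SC SW n low = (LEAST m. \<exists>c<m. low \<le> c \<and> goodP SA SC SW n m c)"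

definition stp :: "nat set \<Rightarrow> nat set \<Rightarrow> nat set \<Rightarrow> nat \<Rightarrow> nat \<Rightarrow> nat" where
  "stp SA SC SW n low = (LEAST c. low \<le> c \<and> goodP SA SC SW n (Mstep SA SC SW n low) c)"

fun sq :: "nat set \<Rightarrow> nat set \<Rightarrow> nat set \<Rightarrow> nat \<Rightarrow> nat" where
  "sq SA SC SW 0 = stp SA SC SW 0 0"
| "sq SA SC SW (Suc k) = stp SA SC SW (Suc k) (Suc (sq SA SC SW k))"

context
  fixes SA SC SW :: "nat set"
  assumes rA: "recursive_set SA" and rC: "recursive_set SC" and rW: "recursive_set SW"
    and ex: "\<And>n low. \<exists>m c. c < m \<and> low \<le> c \<and> goodP SA SC SW n m c"
begin

lemma stp_prop: "low \<le> stp SA SC SW n low \<and> goodP SA SC SW n (Mstep SA SC SW n low) (stp SA SC SW n low)"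
proof -
  obtain m c where "c < m \<and> low \<le> c \<and> goodP SA SC SW n m c" using ex by blast
  hence "\<exists>c<Mstep SA SC SW n low. low \<le> c \<and> goodP SA SC SW n (Mstep SA SC SW n low) c"
    unfolding Mstep_def by (intro LeastI[where P="\<lambda>m. \<exists>c<m. low \<le> c \<and> goodP SA SC SW n m c"]) blast
  hence "\<exists>c. low \<le> c \<and> goodP SA SC SW n (Mstep SA SC SW n low) c" by blast
  thus ?thesis unfolding stp_def by (rule LeastI_ex)
qed

lemma rp_sep: "rpred 2 (\<lambda>xs. sepP SC SW (xs ! 0) (xs ! 1))"
proof -
  have "rpred 3 (\<lambda>xs. xs ! 0 \<in> SC)" by (rule rpred_mem[OF rC rfn_proj]) simp
  moreover have "rpred 3 (\<lambda>xs. prod_encode (xs ! 1, xs ! 0) \<in> SW)"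
    using rpred_mem[OF rW rfn_comp2[OF rfn_pe rfn_proj[of 1 3, simplified] rfn_proj[of 0 3, simplified]]] by simp
  ultimately have "rpred 3 (\<lambda>xs. \<not> (xs ! 0 \<in> SC \<and> prod_encode (xs ! 1, xs ! 0) \<in> SW))"
    by (intro rpred_not rpred_and)
  hence "rpred (Suc 2) (\<lambda>xs. \<not> (xs ! 0 \<in> SC \<and> prod_encode (xs ! 1, xs ! 0) \<in> SW))" by simp
  from rpred_ball2[OF this rfn_proj[of 1 2, simplified]]
  show ?thesis by (rule rpred_cong) (simp add: sepP_def)
qed

lemma h32: "(3::nat) = Suc 2" and h21: "(2::nat) = Suc 1" by simp_all

lemma rp_good: "rpred 3 (\<lambda>xs. goodP SA SC SW (xs ! 0) (xs ! 1) (xs ! 2))"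
proof -
  have s: "rpred 4 (\<lambda>xs. sepP SC SW (xs ! 0) (xs ! 2))"
    using rpred_reidx'[OF rp_sep, of "[0,2]" 4] by simp
  have w: "rpred 4 (\<lambda>xs. prod_encode (xs ! 0, xs ! 3) \<in> SW)"
    using rpred_mem[OF rW rfn_comp2[OF rfn_pe rfn_proj[of 0 4, simplified] rfn_proj[of 3 4, simplified]]] by simp
  have "rpred (Suc 3) (\<lambda>xs. \<not> (sepP SC SW (xs ! 0) (xs ! 2) \<and> prod_encode (xs ! 0, xs ! 3) \<in> SW))"
    using rpred_not[OF rpred_and[OF s w]] by simp
  from rpred_ball2[OF this rfn_succ[OF rfn_proj[of 0 3, simplified]]]
  have "rpred 3 (\<lambda>xs. \<forall>j<Suc (xs ! 0). \<not> (sepP SC SW j (xs ! 1) \<and> prod_encode (j, xs ! 2) \<in> SW))"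
    by (rule rpred_cong) simp
  from rpred_and[OF rpred_mem[OF rA rfn_proj[of 2 3, simplified]] this]
  show ?thesis by (rule rpred_cong) (simp add: goodP_def)
qed

lemma rf_Mstep: "rfn 2 (\<lambda>xs. Mstep SA SC SW (xs ! 0) (xs ! 1))"
proof -
  have g: "rpred 4 (\<lambda>xs. goodP SA SC SW (xs ! 2) (xs ! 1) (xs ! 0))"
    using rpred_reidx'[OF rp_good, of "[2,1,0]" 4] by simp
  have "rpred (Suc 3) (\<lambda>xs. xs ! 3 \<le> xs ! 0 \<and> goodP SA SC SW (xs ! 2) (xs ! 1) (xs ! 0))"
    using rpred_and[OF rpred_le[OF rfn_proj[of 3 4, simplified] rfn_proj[of 0 4, simplified]] g] by simp
  from rpred_bex2[OF this rfn_proj[of 0 3, simplified]]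
  have P: "rpred 3 (\<lambda>xs. \<exists>c<xs ! 0. xs ! 2 \<le> c \<and> goodP SA SC SW (xs ! 1) (xs ! 0) c)"
    by (rule rpred_cong) simp
  have "\<forall>ys. length ys = 2 \<longrightarrow> (\<exists>k. \<exists>c<(k # ys) ! 0. (k # ys) ! 2 \<le> c \<and> goodP SA SC SW ((k # ys) ! 1) ((k # ys) ! 0) c)"
    using ex by simp
  from rfn_least'[OF P h32 this]
  show ?thesis by (rule rfn_cong) (simp add: Mstep_def)
qed

lemma rf_stp: "rfn 2 (\<lambda>xs. stp SA SC SW (xs ! 0) (xs ! 1))"
proof -
  have g: "rpred 3 (\<lambda>xs. goodP SA SC SW (xs ! 1) (Mstep SA SC SW (xs ! 1) (xs ! 2)) (xs ! 0))"
    using rpred_comp[OF rp_good, of "[\<lambda>xs. xs ! 1, \<lambda>xs. Mstep SA SC SW (xs ! 1) (xs ! 2), \<lambda>xs. xs ! 0]" 3]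
      rfn_reidx'[OF rf_Mstep, of "[1,2]" 3]
    by (simp add: rfn_proj)
  have P: "rpred 3 (\<lambda>xs. xs ! 2 \<le> xs ! 0 \<and> goodP SA SC SW (xs ! 1) (Mstep SA SC SW (xs ! 1) (xs ! 2)) (xs ! 0))"
    using rpred_and[OF rpred_le[OF rfn_proj[of 2 3, simplified] rfn_proj[of 0 3, simplified]] g] by simp
  have "\<forall>ys. length ys = 2 \<longrightarrow> (\<exists>k. (k # ys) ! 2 \<le> (k # ys) ! 0 \<and> goodP SA SC SW ((k # ys) ! 1) (Mstep SA SC SW ((k # ys) ! 1) ((k # ys) ! 2)) ((k # ys) ! 0))"
    using stp_prop by simp blast
  from rfn_least'[OF P h32 this]
  show ?thesis by (rule rfn_cong) (simp add: stp_def)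
qed

lemma rf_sq: "rfn 1 (\<lambda>xs. sq SA SC SW (xs ! 0))"
proof -
  let ?F = "\<lambda>ys::nat list. stp SA SC SW 0 0"
  let ?G = "\<lambda>ys::nat list. stp SA SC SW (Suc (ys ! 0)) (Suc (ys ! 1))"
  have F: "rfn 0 ?F" using rfn_comp2[OF rf_stp rfn_zero[of 0] rfn_zero[of 0]] by simp
  have G: "rfn 2 ?G" using rfn_comp2[OF rf_stp rfn_succ[OF rfn_proj[of 0 2, simplified]] rfn_succ[OF rfn_proj[of 1 2, simplified]]] by simp
  have R: "rfn 1 (\<lambda>xs. pr ?F ?G (hd xs) (tl xs))"
    using rfn_prim[of 0 ?F ?G] F G by (simp add: numeral_2_eq_2)
  have E: "pr ?F ?G k ys = sq SA SC SW k" for k ys by (induction k) auto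
  show ?thesis
    by (rule rfn_cong[OF R]) (simp only: E, auto simp: length_Suc_conv)
qed

lemma sq_good: "\<exists>M. goodP SA SC SW k M (sq SA SC SW k)"
  by (cases k) (use stp_prop in auto)

lemma sq_in: "sq SA SC SW k \<in> SA"
  using sq_good[of k] unfolding goodP_def by blast

lemma sq_avoid: "(\<forall>m. sepP SC SW j m) \<Longrightarrow> j \<le> k \<Longrightarrow> prod_encode (j, sq SA SC SW k) \<notin> SW"
  using sq_good[of k] unfolding goodP_def by (auto simp: less_Suc_eq_le)

lemma sq_mono: "sq SA SC SW k < sq SA SC SW (Suc k)"
  using stp_prop[of "Suc (sq SA SC SW k)" "Suc k"] by simp

lemma sq_strict: "strict_mono (sq SA SC SW)"
  unfolding strict_mono_Suc_iff using sq_mono by blast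

lemma rs_range: "recursive_set (range (sq SA SC SW))"
proof -
  have "rpred 2 (\<lambda>xs. sq SA SC SW (xs ! 0) = xs ! 1)"
    using rpred_eq[OF rfn_comp1[OF rf_sq rfn_proj[of 0 2, simplified]] rfn_proj[of 1 2, simplified]] by simp
  from rpred_bex2'[OF this h21 rfn_succ[OF rfn_proj[OF zero_less_one]]]
  have "rpred 1 (\<lambda>xs. \<exists>k<Suc (xs ! 0). sq SA SC SW k = xs ! 0)" by (rule rpred_cong) simp
  hence "rpred 1 (\<lambda>xs. xs ! 0 \<in> range (sq SA SC SW))"
  proof (rule rpred_cong)
    fix xs :: "nat list"
    have "sq SA SC SW k = xs ! 0 \<Longrightarrow> k < Suc (xs ! 0)" for k
      using strict_mono_imp_increasing[OF sq_strict, of k] by simp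
    note kb = this
    show "(\<exists>k<Suc (xs ! 0). sq SA SC SW k = xs ! 0) = (xs ! 0 \<in> range (sq SA SC SW))"
    proof
      assume "\<exists>k<Suc (xs ! 0). sq SA SC SW k = xs ! 0"
      thus "xs ! 0 \<in> range (sq SA SC SW)" by (metis rangeI)
    next
      assume "xs ! 0 \<in> range (sq SA SC SW)"
      then obtain k where "sq SA SC SW k = xs ! 0" by (metis imageE)
      with kb
      show "\<exists>k<Suc (xs ! 0). sq SA SC SW k = xs ! 0" by blast
    qed
  qed
  thus ?thesis by (simp add: recursive_set_rpred)
qed

end



lemma wcode_inj:
  assumes "finite X"
  shows "inj_on (wcode X) (lists X)"
proof -
  obtain h where "bij_betw h X {0..<card X}" using ex_bij_betw_finite_nat[OF assms] by blast
  hence "\<exists>e. bij_betw e X {..<card X}" by (auto simp: atLeast0LessThan)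
  hence "bij_betw (alph_enum X) X {..<card X}" unfolding alph_enum_def by (rule someI_ex)
  hence ia: "inj_on (alph_enum X) X" by (rule bij_betw_imp_inj_on)
  show ?thesis
  proof (rule inj_onI)
    fix x y assume x: "x \<in> lists X" and y: "y \<in> lists X" and eq: "wcode X x = wcode X y"
    hence "map (alph_enum X) x = map (alph_enum X) y" unfolding wcode_def by (simp add: list_encode_eq)
    moreover have "inj_on (alph_enum X) (set x \<union> set y)" using ia x y by (auto intro: inj_on_subset)
    ultimately show "x = y" using inj_on_map_eq_map by blast
  qed
qed

lemma sepP_anti: "sepP SC SW j m \<Longrightarrow> m' \<le> m \<Longrightarrow> sepP SC SW j m'"
  unfolding sepP_def by auto

lemma sep_bound: "\<exists>M. \<forall>j\<le>n. \<not> (\<forall>m. sepP SC SW j m) \<longrightarrow> \<not> sepP SC SW j M"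
proof (induction n)
  case 0 thus ?case by auto
next
  case (Suc n)
  then obtain M where M: "\<forall>j\<le>n. \<not> (\<forall>m. sepP SC SW j m) \<longrightarrow> \<not> sepP SC SW j M" by blast
  show ?case
  proof (cases "\<forall>m. sepP SC SW (Suc n) m")
    case True thus ?thesis using M by (metis le_Suc_eq)
  next
    case False then obtain M' where "\<not> sepP SC SW (Suc n) M'" by blast
    thus ?thesis using M sepP_anti[of SC SW _ "max M M'"]
      by (metis le_Suc_eq max.cobounded1 max.cobounded2)
  qed
qed

lemma finite_Union_L:
  assumes "{} \<in> L" "\<forall>Q\<in>L. \<forall>R\<in>L. Q \<union> R \<in> L" "\<forall>j. e j \<in> L" "finite J"
  shows "\<Union> (e ` J) \<in> L"
  using assms(4) by (induction J rule: finite_induct) (use assms in auto)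

theorem theorem5p4:
  fixes X :: "'a set" and L :: "'a list set set" and C :: "'a list set" and A :: "'a list set list"
  assumes "finite X" and "X \<noteq> {}"
    and "L \<subseteq> Pow (lists X)"
    and "nontrivial X L" and "WP_recursive X L"
    and "\<forall>Q\<in>L. \<forall>R\<in>L. Q \<union> R \<in> L"
    and "\<forall>Q\<in>L. \<forall>R\<in>L. Q \<inter> R \<in> L"
    and "\<forall>Q\<in>L. lists X - Q \<in> L"
    and "cond_class_problem X C A"
    and "recursive_lang X C"
    and "\<forall>i<length A. recursive_lang X (A ! i) \<and> [A ! i] \<notin> cclass X L 1 C"
  shows "\<exists>B. length B = length A \<and> vec_le B A \<and> B \<in> ccore X L (length A) C \<and>
           (\<forall>i<length B. recursive_lang X (B ! i))"
proof -
  note finX = assms(1) and LP = assms(3) and nt = assms(4) and un = assms(6) and cpl = assms(8)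
    and ccp = assms(9) and rCl = assms(10) and hA = assms(11)
  have inj: "inj_on (wcode X) (lists X)" using wcode_inj[OF finX] .
  obtain e :: "nat \<Rightarrow> 'a list set" where re: "range e = L"
    and rW: "recursive_set {prod_encode (i, wcode X w) | i w. w \<in> lists X \<and> w \<in> e i}"
    using assms(5) unfolding WP_recursive_def by blast
  define SW where "SW = {prod_encode (i, wcode X w) | i w. w \<in> lists X \<and> w \<in> e i}"
  define SC where "SC = wcode X ` C"
  define SA where "SA i = wcode X ` (A ! i)" for i
  have eL: "e j \<in> L" for j using re by blast
  have eX: "e j \<subseteq> lists X" for j using eL LP by blast
  have CX: "C \<subseteq> lists X" using ccp unfolding cond_class_problem_def by blast
  have cp: "class_problem X A" using ccp unfolding cond_class_problem_def by blast
  have AX: "A ! i \<subseteq> lists X" "infinite (A ! i)" if "i < length A" for i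
    using cp that unfolding class_problem_def by blast+
  have CA: "C \<inter> A ! i = {}" if "i < length A" for i
    using ccp that unfolding cond_class_problem_def by blast
  have Wiff: "prod_encode (j, c) \<in> SW \<longleftrightarrow> (\<exists>w\<in>lists X. w \<in> e j \<and> wcode X w = c)" for j c
    unfolding SW_def by (auto simp: prod_encode_eq)
  have Wiff2: "prod_encode (j, wcode X w) \<in> SW \<longleftrightarrow> w \<in> e j" if "w \<in> lists X" for j w
    unfolding Wiff using inj that eX by (auto dest: inj_onD)
  have sep_iff: "(\<forall>m. sepP SC SW j m) \<longleftrightarrow> e j \<inter> C = {}" for j
  proof
    assume h: "\<forall>m. sepP SC SW j m"
    show "e j \<inter> C = {}"
    proof (rule ccontr)
      assume "e j \<inter> C \<noteq> {}"
      then obtain w where w: "w \<in> e j" "w \<in> C" by blast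
      hence "wcode X w \<in> SC" "prod_encode (j, wcode X w) \<in> SW"
        using Wiff2 CX unfolding SC_def by auto
      thus False using h unfolding sepP_def by (meson lessI)
    qed
  next
    assume h: "e j \<inter> C = {}"
    show "\<forall>m. sepP SC SW j m" unfolding sepP_def
    proof (intro allI impI notI)
      fix m c assume "c \<in> SC \<and> prod_encode (j, c) \<in> SW"
      then obtain w1 w2 where "w1 \<in> C" "c = wcode X w1" "w2 \<in> lists X" "w2 \<in> e j" "wcode X w2 = c"
        unfolding SC_def Wiff by blast
      moreover hence "w1 = w2" using inj CX by (metis inj_onD subsetD)
      ultimately show False using h by blast
    qed
  qed
  have rC: "recursive_set SC" using rCl unfolding recursive_lang_def SC_def .
  have rA: "recursive_set (SA i)" if "i < length A" for i
    using hA that unfolding recursive_lang_def SA_def by blast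
  have rW': "recursive_set SW" using rW unfolding SW_def .
  have infT: "infinite (A ! i - \<Union> (e ` {j. j \<le> n \<and> e j \<inter> C = {}}))" if i: "i < length A" for i n
  proof
    define T where "T = \<Union> (e ` {j. j \<le> n \<and> e j \<inter> C = {}})"
    assume "finite (A ! i - \<Union> (e ` {j. j \<le> n \<and> e j \<inter> C = {}}))"
    hence fF: "finite (A ! i - T)" unfolding T_def .
    have TL: "T \<in> L" unfolding T_def
      by (rule finite_Union_L) (use nt un eL in \<open>auto simp: nontrivial_def\<close>)
    have TX: "T \<subseteq> lists X" using TL LP by blast
    define Q1 where "Q1 = T \<union> (A ! i - T)"
    have Q1L: "Q1 \<in> L" unfolding Q1_def using nt TL fF AX[OF i] unfolding nontrivial_def by blast
    have Q1X: "Q1 \<subseteq> lists X" using Q1L LP by blast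
    define Q0 where "Q0 = lists X - Q1"
    have Q0L: "Q0 \<in> L" unfolding Q0_def using cpl Q1L by blast
    have CT: "C \<inter> T = {}" unfolding T_def by blast
    have "[A ! i] \<in> cclass X L 1 C"
      unfolding cclass_def
    proof (intro CollectI conjI exI)
      show "length [A ! i] = 1" by simp
      show "cond_class_problem X C [A ! i]"
        using CX AX[OF i] CA[OF i]
        unfolding cond_class_problem_def class_problem_def pw_disjoint_def by auto
      show "length [Q0, Q1] = 1 + 1" by simp
      show "L_partition X L [Q0, Q1]"
        unfolding L_partition_def pw_disjoint_def using Q0L Q1L Q1X
        by (auto simp: Q0_def less_Suc_eq nth_Cons')
      show "C \<subseteq> [Q0, Q1] ! 0" using CX CT CA[OF i] by (auto simp: Q0_def Q1_def)
      show "vec_le [A ! i] (tl [Q0, Q1])" unfolding vec_le_def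
        by (rule conjI, simp, rule conjI, simp, rule exI[of _ id]) (auto simp: Q1_def)
    qed
    thus False using hA i by blast
  qed
  have ex: "\<exists>m c. c < m \<and> low \<le> c \<and> goodP (SA i) SC SW n m c" if i: "i < length A" for i n low
  proof -
    let ?T = "\<Union> (e ` {j. j \<le> n \<and> e j \<inter> C = {}})"
    have "inj_on (wcode X) (A ! i - ?T)" by (rule inj_on_subset[OF inj]) (use AX(1)[OF i] in blast)
    hence "infinite (wcode X ` (A ! i - ?T))"
      using infT[OF i] finite_imageD by blast
    hence "\<not> (\<forall>c \<in> wcode X ` (A ! i - ?T). c < low)"
      using finite_nat_set_iff_bounded by blast
    then obtain c where c: "c \<ge> low" "c \<in> wcode X ` (A ! i - ?T)" by (auto simp: not_less)
    then obtain w where w: "w \<in> A ! i" "w \<notin> ?T" "c = wcode X w" by blast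
    have wX: "w \<in> lists X" using w AX(1)[OF i] by blast
    obtain M where M: "\<forall>j\<le>n. \<not> (\<forall>m. sepP SC SW j m) \<longrightarrow> \<not> sepP SC SW j M"
      using sep_bound by blast
    have "goodP (SA i) SC SW n (max M (Suc c)) c"
      unfolding goodP_def
    proof (intro conjI allI impI notI)
      show "c \<in> SA i" using w unfolding SA_def by blast
    next
      fix j assume j: "j < Suc n" and h: "sepP SC SW j (max M (Suc c)) \<and> prod_encode (j, c) \<in> SW"
      show False
      proof (cases "\<forall>m. sepP SC SW j m")
        case True
        hence "e j \<inter> C = {}" using sep_iff by blast
        hence "w \<notin> e j" using w j by auto
        thus False using h Wiff2[OF wX] w by simp
      next
        case False
        hence "\<not> sepP SC SW j M" using M j by simp
        thus False using h sepP_anti[of SC SW j "max M (Suc c)" M] by simp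
      qed
    qed
    thus ?thesis using c by (intro exI[of _ "max M (Suc c)"] exI[of _ c]) auto
  qed
  define s where "s i = sq (SA i) SC SW" for i
  define Bs where "Bs i = {w \<in> A ! i. wcode X w \<in> range (s i)}" for i
  define B where "B = map Bs [0..<length A]"
  have s_in: "s i k \<in> SA i" if "i < length A" for i k
    unfolding s_def using sq_in[OF rA[OF that] rC rW' ex[OF that]] .
  have s_sm: "strict_mono (s i)" if "i < length A" for i
    unfolding s_def using sq_strict[OF rA[OF that] rC rW' ex[OF that]] .
  have img: "wcode X ` Bs i = range (s i)" if i: "i < length A" for i
  proof
    show "wcode X ` Bs i \<subseteq> range (s i)" unfolding Bs_def by blast
    show "range (s i) \<subseteq> wcode X ` Bs i"
    proof
      fix c assume "c \<in> range (s i)"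
      moreover hence "c \<in> SA i" using s_in[OF i] by blast
      ultimately obtain w where "w \<in> A ! i" "c = wcode X w" "c \<in> range (s i)" unfolding SA_def by blast
      thus "c \<in> wcode X ` Bs i" unfolding Bs_def by blast
    qed
  qed
  have Bsub: "Bs i \<subseteq> A ! i" for i unfolding Bs_def by blast
  have Binf: "infinite (Bs i)" if i: "i < length A" for i
  proof
    assume "finite (Bs i)"
    hence "finite (range (s i))" using img[OF i] by (metis finite_imageI)
    moreover have "inj (s i)" using s_sm[OF i] by (rule strict_mono_imp_inj_on)
    ultimately show False by (simp add: finite_image_iff)
  qed
  have Bfin: "finite (Bs i \<inter> e j)" if i: "i < length A" and dj: "e j \<inter> C = {}" for i j
  proof -
    have sj: "\<forall>m. sepP SC SW j m" using sep_iff dj by blast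
    have "wcode X ` (Bs i \<inter> e j) \<subseteq> s i ` {..<j}"
    proof
      fix c assume "c \<in> wcode X ` (Bs i \<inter> e j)"
      then obtain w k where w: "w \<in> A ! i" "w \<in> e j" "c = wcode X w" "wcode X w = s i k"
        unfolding Bs_def by blast
      have "w \<in> lists X" using w eX by blast
      hence "prod_encode (j, s i k) \<in> SW" using Wiff2 w by metis
      hence "\<not> j \<le> k" using sq_avoid[OF rA[OF i] rC rW' ex[OF i] sj] unfolding s_def by blast
      thus "c \<in> s i ` {..<j}" using w by auto
    qed
    hence "finite (wcode X ` (Bs i \<inter> e j))" by (rule finite_subset) simp
    moreover have "inj_on (wcode X) (Bs i \<inter> e j)" by (rule inj_on_subset[OF inj]) (use eX in blast)
    ultimately show ?thesis using finite_image_iff by blast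
  qed
  have lenA: "length A \<ge> 1" using cp unfolding class_problem_def by blast
  have lenB: "length B = length A" unfolding B_def by simp
  have Bnth: "B ! i = Bs i" if "i < length A" for i unfolding B_def using that by simp
  show ?thesis
  proof (intro exI conjI)
    show "length B = length A" by (rule lenB)
    show "vec_le B A" unfolding vec_le_def
      using lenA lenB Bnth Bsub by (intro conjI exI[of _ id]) auto
    show "\<forall>i<length B. recursive_lang X (B ! i)"
      using lenB Bnth img rs_range[OF rA rC rW' ex] unfolding recursive_lang_def s_def by auto
    show "B \<in> ccore X L (length A) C"
      unfolding ccore_def
    proof (intro CollectI conjI allI impI)
      show "length B = length A" by (rule lenB)
      show "cond_class_problem X C B"
        unfolding cond_class_problem_def class_problem_def pw_disjoint_def
      proof (intro conjI allI impI)
        show "C \<subseteq> lists X" by (rule CX)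
        show "1 \<le> length B" using lenA lenB by simp
        fix i assume i: "i < length B"
        show "B ! i \<subseteq> lists X" using i lenB Bnth Bsub AX by fastforce
        show "infinite (B ! i)" using i lenB Bnth Binf by auto
        show "C \<inter> B ! i = {}" using i lenB Bnth Bsub CA by fastforce
        fix j assume j: "j < length B" and ij: "i \<noteq> j"
        have "A ! i \<inter> A ! j = {}" using cp i j ij lenB unfolding class_problem_def pw_disjoint_def by auto
        thus "B ! i \<inter> B ! j = {}" using i j lenB Bnth Bsub by fastforce
      qed
    next
      fix A' assume h: "class_problem X A' \<and> vec_le A' B"
      show "A' \<notin> cclass X L (length A') C"
      proof
        assume "A' \<in> cclass X L (length A') C"
        then obtain Q where Ql: "length Q = length A' + 1" and QP: "L_partition X L Q"
          and CQ: "C \<subseteq> Q ! 0" and vQ: "vec_le A' (tl Q)" unfolding cclass_def by blast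
        obtain \<tau> where \<tau>: "\<tau> ` {..<length A'} \<subseteq> {..<length B}" "\<forall>i<length A'. A' ! i \<subseteq> B ! \<tau> i"
          and l1: "1 \<le> length A'" using h unfolding vec_le_def by blast
        obtain \<sigma> where \<sigma>: "\<sigma> ` {..<length A'} \<subseteq> {..<length (tl Q)}" "\<forall>i<length A'. A' ! i \<subseteq> tl Q ! \<sigma> i"
          using vQ unfolding vec_le_def by blast
        have "0 < length A'" using l1 by linarith
        hence z: "0 \<in> {..<length A'}" by simp
        have "\<tau> 0 \<in> {..<length B}" using \<tau>(1) z by (rule subsetD[OF _ imageI])
        hence t0: "\<tau> 0 < length A" using lenB by simp
        have "\<sigma> 0 \<in> {..<length (tl Q)}" using \<sigma>(1) z by (rule subsetD[OF _ imageI])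
        hence s0: "\<sigma> 0 < length Q - 1" by simp
        have A1: "A' ! 0 \<subseteq> B ! \<tau> 0" using \<tau>(2)[rule_format, of 0] \<open>0 < length A'\<close> by simp
        have "A' ! 0 \<subseteq> tl Q ! \<sigma> 0" using \<sigma>(2)[rule_format, of 0] \<open>0 < length A'\<close> by simp
        moreover have "tl Q ! \<sigma> 0 = Q ! Suc (\<sigma> 0)" using s0 by (simp add: nth_tl)
        ultimately have A2: "A' ! 0 \<subseteq> Q ! Suc (\<sigma> 0)" by simp
        have "Q ! Suc (\<sigma> 0) \<in> L" using QP s0 unfolding L_partition_def by auto
        then obtain j where ej: "e j = Q ! Suc (\<sigma> 0)" using re by blast
        have "Q ! Suc (\<sigma> 0) \<inter> Q ! 0 = {}"
        proof -
          have "pw_disjoint Q" using QP unfolding L_partition_def by blast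
          moreover have "Suc (\<sigma> 0) < length Q" "0 < length Q" using s0 by auto
          ultimately show ?thesis unfolding pw_disjoint_def by blast
        qed
        hence "e j \<inter> C = {}" using ej CQ by blast
        hence "finite (Bs (\<tau> 0) \<inter> e j)" using Bfin t0 by blast
        moreover have "A' ! 0 \<subseteq> Bs (\<tau> 0) \<inter> e j" using A1 A2 ej Bnth t0 by auto
        moreover have "infinite (A' ! 0)" using h \<open>0 < length A'\<close> unfolding class_problem_def by blast
        ultimately show False using finite_subset by blast
      qed
    qed
  qed
qed


end
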